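(* Let $s\ge1$ and let $A:[0,\infty)\to\mathbb R$ be continuous with $A(t)\ge-(t+1)^s$ for all $t\ge0$. Let $(d,\rho)$ solve $$\dot d=-\tfrac12 d^2+A(t)\rho^2-\rho+1,\qquad \dot\rho=-d\rho,$$ and let $(b,a)$ solve $$\dot b=-\tfrac12 b^2-(t+1)^s a^2-a+1,\qquad \dot a=-ba.$$ If $b(0)<d(0)$ and $0<\rho(0)<a(0)$, then $b(t)<d(t)$ and $0<\rho(t)<a(t)$ for all $t>0$ at which both solutions are defined. *)

theory Defs
  imports "HOL-Analysis.Analysis"
begin

end

theory Submission
  imports Defs
begin

lemma mvt_ge:
  fixes f D :: "real \<Rightarrow> real"
  assumes ab: "a < b"
    and der: "\<And>x. x \<in> {a..b} \<Longrightarrow> (f has_real_derivative D x) (at x within {a..b})"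
    and nn: "\<And>x. a < x \<Longrightarrow> x < b \<Longrightarrow> D x \<ge> 0"
  shows "f a \<le> f b"
proof -
  have "\<exists>x\<in>{a<..<b}. f b - f a = (\<lambda>x. (*) (D x)) x (b - a)"
    by (rule mvt_simple[OF ab]) (use der in \<open>auto simp: has_field_derivative_def\<close>)
  then obtain x where x: "a < x" "x < b" "f b - f a = D x * (b - a)" by auto
  have "D x * (b - a) \<ge> 0" using nn[OF x(1,2)] ab by simp
  then show ?thesis using x(3) by simp
qed

lemma lin_ge:
  fixes f g f' :: "real \<Rightarrow> real"
  assumes T: "0 < T"
    and gc: "continuous_on {0..T} g"
    and der: "\<And>x. x \<in> {0..T} \<Longrightarrow> (f has_real_derivative f' x) (at x within {0..T})"
    and ineq: "\<And>x. 0 < x \<Longrightarrow> x < T \<Longrightarrow> f' x \<ge> - g x * f x"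
    and f0: "f 0 > 0"
  shows "f T > 0"
proof -
  define G where "G x = integral {0..x} g" for x
  have G': "(G has_real_derivative g x) (at x within {0..T})" if "x \<in> {0..T}" for x
    unfolding G_def by (rule integral_has_real_derivative[OF gc that])
  define h where "h x = f x * exp (G x)" for x
  have h': "(h has_real_derivative (f' x * exp (G x) + f x * (exp (G x) * g x))) (at x within {0..T})"
    if "x \<in> {0..T}" for x
  proof -
    have e: "((\<lambda>x. exp (G x)) has_real_derivative exp (G x) * g x) (at x within {0..T})"
      using DERIV_chain2[OF DERIV_exp G'[OF that]] by (simp add: o_def)
    show ?thesis unfolding h_def
      using DERIV_mult[OF der[OF that] e] by (simp add: algebra_simps)
  qed
  have "h 0 \<le> h T"
  proof (rule mvt_ge[OF T h'])
    fix x assume "0 < x" "x < T"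
    then have "f' x + g x * f x \<ge> 0" using ineq by (smt (verit) mult_minus_left)
    then have "(f' x + g x * f x) * exp (G x) \<ge> 0" by simp
    then show "f' x * exp (G x) + f x * (exp (G x) * g x) \<ge> 0"
      by (simp add: algebra_simps)
  qed
  moreover have "h 0 = f 0" by (simp add: h_def G_def)
  ultimately have "f T * exp (G T) > 0" using f0 h_def by simp
  then show ?thesis by (simp add: zero_less_mult_iff)
qed

lemma lin_pos:
  fixes f g :: "real \<Rightarrow> real"
  assumes gc: "continuous_on {0..t} g"
    and der: "\<And>x. x \<in> {0..t} \<Longrightarrow> (f has_real_derivative (- g x * f x)) (at x within {0..t})"
    and f0: "f 0 > 0" and tau: "\<tau> \<in> {0..t}"
  shows "f \<tau> > 0"
proof (cases "\<tau> = 0")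
  case True then show ?thesis using f0 by simp
next
  case False
  then have tp: "0 < \<tau>" using tau by simp
  have sub: "{0..\<tau>} \<subseteq> {0..t}" using tau by auto
  show ?thesis
  proof (rule lin_ge[OF tp, where g=g and f'="\<lambda>x. - g x * f x"])
    show "continuous_on {0..\<tau>} g" using gc sub continuous_on_subset by blast
    show "(f has_real_derivative - g x * f x) (at x within {0..\<tau>})" if "x \<in> {0..\<tau>}" for x
      using der[of x] that sub has_field_derivative_subset by blast
  qed (use f0 in auto)
qed

theorem lemma4p4:
  fixes s :: real and A d \<rho> b a :: "real \<Rightarrow> real" and I J :: "real set"
  assumes s: "s \<ge> 1"
    and A_cont: "continuous_on {0..} A"
    and A_lb: "\<And>t. t \<ge> 0 \<Longrightarrow> A t \<ge> - ((t + 1) powr s)"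
    and I: "is_interval I" "0 \<in> I" "I \<subseteq> {0..}"
    and J: "is_interval J" "0 \<in> J" "J \<subseteq> {0..}"
    and d_ode: "\<And>t. t \<in> I \<Longrightarrow>
        (d has_real_derivative (- (1/2) * (d t)^2 + A t * (\<rho> t)^2 - \<rho> t + 1)) (at t within I)"
    and \<rho>_ode: "\<And>t. t \<in> I \<Longrightarrow> (\<rho> has_real_derivative (- d t * \<rho> t)) (at t within I)"
    and b_ode: "\<And>t. t \<in> J \<Longrightarrow>
        (b has_real_derivative (- (1/2) * (b t)^2 - (t + 1) powr s * (a t)^2 - a t + 1)) (at t within J)"
    and a_ode: "\<And>t. t \<in> J \<Longrightarrow> (a has_real_derivative (- b t * a t)) (at t within J)"
    and init: "b 0 < d 0" "0 < \<rho> 0" "\<rho> 0 < a 0"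
  shows "\<forall>t \<in> I \<inter> J. t > 0 \<longrightarrow> b t < d t \<and> 0 < \<rho> t \<and> \<rho> t < a t"
proof (intro ballI impI)
  fix t assume tIJ: "t \<in> I \<inter> J" and t0: "0 < t"
  let ?K = "{0..t}"
  have KI: "?K \<subseteq> I"
  proof
    fix x assume x: "x \<in> ?K"
    have iv: "\<forall>a\<in>I. \<forall>b\<in>I. \<forall>x. a \<le> x \<and> x \<le> b \<longrightarrow> x \<in> I"
      using I(1) unfolding is_interval_1 .
    have "t \<in> I" using tIJ by simp
    then show "x \<in> I" using iv[rule_format, of 0 t x] I(2) x by simp
  qed
  have KJ: "?K \<subseteq> J"
  proof
    fix x assume x: "x \<in> ?K"
    have iv: "\<forall>a\<in>J. \<forall>b\<in>J. \<forall>x. a \<le> x \<and> x \<le> b \<longrightarrow> x \<in> J"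
      using J(1) unfolding is_interval_1 .
    have "t \<in> J" using tIJ by simp
    then show "x \<in> J" using iv[rule_format, of 0 t x] J(2) x by simp
  qed
  have d': "(d has_real_derivative (- (1/2) * (d x)^2 + A x * (\<rho> x)^2 - \<rho> x + 1)) (at x within ?K)"
    if "x \<in> ?K" for x by (rule has_field_derivative_subset[OF d_ode[OF subsetD[OF KI that]] KI])
  have \<rho>': "(\<rho> has_real_derivative (- d x * \<rho> x)) (at x within ?K)"
    if "x \<in> ?K" for x by (rule has_field_derivative_subset[OF \<rho>_ode[OF subsetD[OF KI that]] KI])
  have b': "(b has_real_derivative (- (1/2) * (b x)^2 - (x + 1) powr s * (a x)^2 - a x + 1)) (at x within ?K)"
    if "x \<in> ?K" for x by (rule has_field_derivative_subset[OF b_ode[OF subsetD[OF KJ that]] KJ])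
  have a': "(a has_real_derivative (- b x * a x)) (at x within ?K)"
    if "x \<in> ?K" for x by (rule has_field_derivative_subset[OF a_ode[OF subsetD[OF KJ that]] KJ])
  have cd: "continuous_on ?K d"
    by (rule DERIV_continuous_on[OF d'])
  have cb: "continuous_on ?K b"
    by (rule DERIV_continuous_on[OF b'])
  have c\<rho>: "continuous_on ?K \<rho>"
    by (rule DERIV_continuous_on[OF \<rho>'])
  have ca: "continuous_on ?K a"
    by (rule DERIV_continuous_on[OF a'])
  have \<rho>pos: "\<rho> x > 0" if "x \<in> ?K" for x
    by (rule lin_pos[OF cd \<rho>' init(2) that])
  have apos: "a x > 0" if "x \<in> ?K" for x
    using lin_pos[OF cb a' _ that] init by linarith
  define S where "S = {x \<in> ?K. d x - b x \<le> 0 \<or> a x - \<rho> x \<le> 0}"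
  show "b t < d t \<and> 0 < \<rho> t \<and> \<rho> t < a t"
  proof (cases "S = {}")
    case True
    then show ?thesis using \<rho>pos[of t] t0 unfolding S_def by auto
  next
    case False
    have cS: "closed S"
    proof -
      have c1: "continuous_on ?K (\<lambda>x. d x - b x)" using cd cb by (intro continuous_intros)
      have c2: "continuous_on ?K (\<lambda>x. a x - \<rho> x)" using ca c\<rho> by (intro continuous_intros)
      have "closed (?K \<inter> (\<lambda>x. d x - b x) -` {..0})"
        by (rule continuous_closed_preimage[OF c1]) auto
      moreover have "closed (?K \<inter> (\<lambda>x. a x - \<rho> x) -` {..0})"
        by (rule continuous_closed_preimage[OF c2]) auto
      ultimately have "closed ((?K \<inter> (\<lambda>x. d x - b x) -` {..0}) \<union> (?K \<inter> (\<lambda>x. a x - \<rho> x) -` {..0}))"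
        by blast
      moreover have "S = (?K \<inter> (\<lambda>x. d x - b x) -` {..0}) \<union> (?K \<inter> (\<lambda>x. a x - \<rho> x) -` {..0})"
        unfolding S_def by auto
      ultimately show ?thesis by simp
    qed
    have bdd: "bdd_below S" unfolding S_def by (rule bdd_belowI[of _ 0]) auto
    define T where "T = Inf S"
    have TS: "T \<in> S" unfolding T_def using closed_contains_Inf[OF False bdd cS] .
    have TK: "T \<in> ?K" using TS S_def by auto
    have T0: "T \<noteq> 0" using TS init unfolding S_def by auto
    then have Tp: "0 < T" using TK by auto
    have notS: "x \<notin> S" if "x < T" for x
      using cInf_lower[OF _ bdd, of x] that T_def by force
    have good: "b x < d x \<and> \<rho> x < a x" if "0 < x" "x < T" for x
      using notS[of x] that TK unfolding S_def by auto
    have subT: "{0..T} \<subseteq> ?K" using TK by auto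
    have g1: "d T - b T > 0"
    proof (rule lin_ge[OF Tp, where g="\<lambda>x. (d x + b x) / 2"
          and f'="\<lambda>x. (- (1/2) * (d x)^2 + A x * (\<rho> x)^2 - \<rho> x + 1) -
                     (- (1/2) * (b x)^2 - (x + 1) powr s * (a x)^2 - a x + 1)"])
      show "continuous_on {0..T} (\<lambda>x. (d x + b x) / 2)"
        using continuous_on_subset[OF cd subT] continuous_on_subset[OF cb subT] by (intro continuous_intros) auto
      show "((\<lambda>x. d x - b x) has_real_derivative
          (- (1/2) * (d x)^2 + A x * (\<rho> x)^2 - \<rho> x + 1) -
          (- (1/2) * (b x)^2 - (x + 1) powr s * (a x)^2 - a x + 1)) (at x within {0..T})"
        if "x \<in> {0..T}" for x
      proof -
        have xK: "x \<in> ?K" using that subT by auto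
        show ?thesis
          by (rule DERIV_diff[OF has_field_derivative_subset[OF d'[OF xK] subT] has_field_derivative_subset[OF b'[OF xK] subT]])
      qed
      fix x assume x: "0 < x" "x < T"
      have gx: "b x < d x" "\<rho> x < a x" using good[OF x] by auto
      have xK: "x \<in> ?K" using x TK by auto
      have rp: "\<rho> x > 0" using \<rho>pos[OF xK] .
      have Al: "A x \<ge> - ((x + 1) powr s)" using A_lb x by simp
      have P: "(x + 1) powr s \<ge> 0" by simp
      have "- ((x + 1) powr s) * (\<rho> x)^2 \<le> A x * (\<rho> x)^2"
        by (rule mult_right_mono[OF Al]) simp
      then have h1: "A x * (\<rho> x)^2 \<ge> - ((x + 1) powr s * (\<rho> x)^2)" by simp
      have "(\<rho> x)^2 \<le> (a x)^2" using gx rp by (intro power_mono) auto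
      then have h2: "(x + 1) powr s * (\<rho> x)^2 \<le> (x + 1) powr s * (a x)^2"
        using P by (rule mult_left_mono)
      have h3: "- ((d x + b x) / 2) * (d x - b x) = - (1/2) * (d x)^2 + (1/2) * (b x)^2"
        by (simp add: power2_eq_square field_simps)
      show "(- (1/2) * (d x)^2 + A x * (\<rho> x)^2 - \<rho> x + 1) -
          (- (1/2) * (b x)^2 - (x + 1) powr s * (a x)^2 - a x + 1) \<ge> - ((d x + b x) / 2) * (d x - b x)"
        using h1 h2 h3 gx by linarith
    qed (use init in auto)
    have g2: "\<rho> T / a T \<le> \<rho> 0 / a 0"
    proof -
      have "- (\<rho> T / a T) \<ge> - (\<rho> 0 / a 0)"
      proof (rule mvt_ge[OF Tp, where f="\<lambda>x. - (\<rho> x / a x)"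
            and D="\<lambda>x. - ((- d x * \<rho> x * a x - \<rho> x * (- b x * a x)) / (a x * a x))"])
        show "((\<lambda>x. - (\<rho> x / a x)) has_real_derivative
            - ((- d x * \<rho> x * a x - \<rho> x * (- b x * a x)) / (a x * a x))) (at x within {0..T})"
          if "x \<in> {0..T}" for x
        proof -
          have xK: "x \<in> ?K" using that subT by auto
          show ?thesis
            using DERIV_minus[OF DERIV_divide[OF has_field_derivative_subset[OF \<rho>'[OF xK] subT]
               has_field_derivative_subset[OF a'[OF xK] subT]]] apos[OF xK] by simp
        qed
        fix x assume x: "0 < x" "x < T"
        have gx: "b x < d x" using good[OF x] by auto
        have xK: "x \<in> ?K" using x TK by auto
        have "(- d x * \<rho> x * a x - \<rho> x * (- b x * a x)) = (\<rho> x * a x) * (b x - d x)"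
          by (simp add: algebra_simps)
        moreover have "(\<rho> x * a x) * (b x - d x) \<le> 0"
          using \<rho>pos[OF xK] apos[OF xK] gx by (simp add: mult_nonneg_nonpos)
        ultimately have "(- d x * \<rho> x * a x - \<rho> x * (- b x * a x)) \<le> 0" by simp
        moreover have "a x * a x > 0" using apos[OF xK] by simp
        ultimately have "(- d x * \<rho> x * a x - \<rho> x * (- b x * a x)) / (a x * a x) \<le> 0"
          by (intro divide_nonpos_pos)
        then show "0 \<le> - ((- d x * \<rho> x * a x - \<rho> x * (- b x * a x)) / (a x * a x))"
          by linarith
      qed
      then show ?thesis by simp
    qed
    have "\<rho> 0 / a 0 < 1" using init by simp
    then have "\<rho> T / a T < 1" using g2 by simp
    then have "\<rho> T < a T" using apos[OF TK] by (simp add: divide_less_eq)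
    then have "T \<notin> S" using g1 unfolding S_def by auto
    then show ?thesis using TS by simp
  qed
qed

end
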